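(* If a mechanism $\varphi$ is separation monotonic, separation upper invariant, and separation lower invariant, then it is $L$-separation strategyproof for any $L\ge 2$.
   Context: Let $M$ be a finite set of alternatives. A preference order is a weak order $R$ on $M$ (strict part $P$), represented as $M_1 ~P~ \ldots ~P~ M_K$ with $(M_k)$ a partition of $M$ into indifference classes, each class strictly preferred to the next. A mechanism is a map $\varphi$ from preference orders to lotteries over $M$; $\varphi_A(R)=\sum_{a\in A}\varphi_a(R)$. A lottery $x$ first order-stochastically dominates $y$ at $R$ if $\sum_{j: j R a} x_j \ge \sum_{j: j R a} y_j$ for all $a\in M$. A separation is a pair $(R,R')$ such that for some $\kappa$, $R'$ is obtained from $R=M_1 P\ldots P M_K$ by replacing the class $M_\kappa$ with $M^1_\kappa P' M^2_\kappa$, where $M^1_\kappa\dot\cup M^2_\kappa=M_\kappa$, leaving all other classes and their order unchanged. $\varphi$ is separation responsive if for all separations $\varphi_{M^1_\kappa}(R')\ge\varphi_{M^1_\kappa}(R)$ and $\varphi_{M^2_\kappa}(R')\le\varphi_{M^2_\kappa}(R)$; separation direct if for all separations with $\varphi_{M_k}(R)\ne\varphi_{M_k}(R')$ for some $k$, both $\varphi_{M^1_\kappa}(R')\ne\varphi_{M^1_\kappa}(R)$ and $\varphi_{M^2_\kappa}(R')\ne\varphi_{M^2_\kappa}(R)$; separation monotonic if both; separation upper (resp. lower) invariant if for all separations $\varphi_{M_k}(R)=\varphi_{M_k}(R')$ for all $k<\kappa$ (resp. all $k>\kappa$). An $L$-separation ($L\ge 2$) is a pair $(R,R')$ such that for some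 $\kappa$, $R'$ is obtained from $R$ by replacing the class $M_\kappa$ with $M^1_\kappa P' \ldots P' M^L_\kappa$, where $M_\kappa=\bigcup_{l=1}^L M^l_\kappa$ is a partition into pairwise disjoint sets, all other classes and their order unchanged. $\varphi$ is $L$-separation strategyproof if for every $L$-separation $(R,R')$: $\varphi(R)$ first order-stochastically dominates $\varphi(R')$ at $R$, and $\varphi(R')$ first order-stochastically dominates $\varphi(R)$ at $R'$. *)

theory Defs
  imports Complex_Main
begin

(* A preference order on the finite set M of alternatives is represented by the list
   [M_1, ..., M_K] of its indifference classes, best first:
   nonempty, pairwise disjoint, covering M. *)
definition pref_order :: "'a set \<Rightarrow> 'a set list \<Rightarrow> bool" where
  "pref_order M Ms \<longleftrightarrow>
     (\<forall>X\<in>set Ms. X \<noteq> {}) \<and>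
     (\<forall>i j. i < length Ms \<longrightarrow> j < length Ms \<longrightarrow> i \<noteq> j \<longrightarrow> Ms!i \<inter> Ms!j = {}) \<and>
     \<Union>(set Ms) = M"

definition weakly_pref :: "'a set list \<Rightarrow> 'a \<Rightarrow> 'a \<Rightarrow> bool" where
  "weakly_pref Ms j a \<longleftrightarrow>
     (\<exists>k l. k \<le> l \<and> l < length Ms \<and> j \<in> Ms!k \<and> a \<in> Ms!l)"

definition mechanism :: "'a set \<Rightarrow> ('a set list \<Rightarrow> 'a \<Rightarrow> real) \<Rightarrow> bool" where
  "mechanism M \<phi> \<longleftrightarrow>
     (\<forall>Ms. pref_order M Ms \<longrightarrow> (\<forall>a\<in>M. 0 \<le> \<phi> Ms a) \<and> sum (\<phi> Ms) M = 1)"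

definition fosd :: "'a set \<Rightarrow> 'a set list \<Rightarrow> ('a \<Rightarrow> real) \<Rightarrow> ('a \<Rightarrow> real) \<Rightarrow> bool" where
  "fosd M Ms x y \<longleftrightarrow>
     (\<forall>a\<in>M. sum x {j\<in>M. weakly_pref Ms j a} \<ge> sum y {j\<in>M. weakly_pref Ms j a})"

definition separation ::
  "'a set \<Rightarrow> 'a set list \<Rightarrow> 'a set list \<Rightarrow> nat \<Rightarrow> 'a set \<Rightarrow> 'a set \<Rightarrow> bool" where
  "separation M Ms Ms' \<kappa> A1 A2 \<longleftrightarrow>
     pref_order M Ms \<and> pref_order M Ms' \<and> \<kappa> < length Ms \<and>
     A1 \<union> A2 = Ms!\<kappa> \<and> A1 \<inter> A2 = {} \<and>
     Ms' = take \<kappa> Ms @ [A1, A2] @ drop (Suc \<kappa>) Ms"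

definition sep_responsive :: "'a set \<Rightarrow> ('a set list \<Rightarrow> 'a \<Rightarrow> real) \<Rightarrow> bool" where
  "sep_responsive M \<phi> \<longleftrightarrow>
     (\<forall>Ms Ms' \<kappa> A1 A2. separation M Ms Ms' \<kappa> A1 A2 \<longrightarrow>
        sum (\<phi> Ms') A1 \<ge> sum (\<phi> Ms) A1 \<and> sum (\<phi> Ms') A2 \<le> sum (\<phi> Ms) A2)"

definition sep_direct :: "'a set \<Rightarrow> ('a set list \<Rightarrow> 'a \<Rightarrow> real) \<Rightarrow> bool" where
  "sep_direct M \<phi> \<longleftrightarrow>
     (\<forall>Ms Ms' \<kappa> A1 A2. separation M Ms Ms' \<kappa> A1 A2 \<longrightarrow>
        (\<exists>k < length Ms. sum (\<phi> Ms) (Ms!k) \<noteq> sum (\<phi> Ms') (Ms!k)) \<longrightarrow>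
        sum (\<phi> Ms') A1 \<noteq> sum (\<phi> Ms) A1 \<and> sum (\<phi> Ms') A2 \<noteq> sum (\<phi> Ms) A2)"

definition sep_monotonic :: "'a set \<Rightarrow> ('a set list \<Rightarrow> 'a \<Rightarrow> real) \<Rightarrow> bool" where
  "sep_monotonic M \<phi> \<longleftrightarrow> sep_responsive M \<phi> \<and> sep_direct M \<phi>"

definition sep_upper_invariant :: "'a set \<Rightarrow> ('a set list \<Rightarrow> 'a \<Rightarrow> real) \<Rightarrow> bool" where
  "sep_upper_invariant M \<phi> \<longleftrightarrow>
     (\<forall>Ms Ms' \<kappa> A1 A2. separation M Ms Ms' \<kappa> A1 A2 \<longrightarrow>
        (\<forall>k < \<kappa>. sum (\<phi> Ms) (Ms!k) = sum (\<phi> Ms') (Ms!k)))"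

definition sep_lower_invariant :: "'a set \<Rightarrow> ('a set list \<Rightarrow> 'a \<Rightarrow> real) \<Rightarrow> bool" where
  "sep_lower_invariant M \<phi> \<longleftrightarrow>
     (\<forall>Ms Ms' \<kappa> A1 A2. separation M Ms Ms' \<kappa> A1 A2 \<longrightarrow>
        (\<forall>k. \<kappa> < k \<longrightarrow> k < length Ms \<longrightarrow> sum (\<phi> Ms) (Ms!k) = sum (\<phi> Ms') (Ms!k)))"

definition L_separation ::
  "'a set \<Rightarrow> nat \<Rightarrow> 'a set list \<Rightarrow> 'a set list \<Rightarrow> nat \<Rightarrow> 'a set list \<Rightarrow> bool" where
  "L_separation M L Ms Ms' \<kappa> Ps \<longleftrightarrow>
     pref_order M Ms \<and> pref_order M Ms' \<and> \<kappa> < length Ms \<and>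
     length Ps = L \<and> \<Union>(set Ps) = Ms!\<kappa> \<and>
     (\<forall>i j. i < L \<longrightarrow> j < L \<longrightarrow> i \<noteq> j \<longrightarrow> Ps!i \<inter> Ps!j = {}) \<and>
     Ms' = take \<kappa> Ms @ Ps @ drop (Suc \<kappa>) Ms"

definition L_sep_strategyproof :: "'a set \<Rightarrow> nat \<Rightarrow> ('a set list \<Rightarrow> 'a \<Rightarrow> real) \<Rightarrow> bool" where
  "L_sep_strategyproof M L \<phi> \<longleftrightarrow>
     (\<forall>Ms Ms' \<kappa> Ps. L_separation M L Ms Ms' \<kappa> Ps \<longrightarrow>
        fosd M Ms (\<phi> Ms) (\<phi> Ms') \<and> fosd M Ms' (\<phi> Ms') (\<phi> Ms))"

end

theory Submission
  imports Defs
begin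

definition pdf :: "'a set list \<Rightarrow> bool" where
  "pdf Xs \<longleftrightarrow> (\<forall>x. length (filter (\<lambda>X. x \<in> X) Xs) \<le> 1)"

lemma len_filter_pos: "x \<in> \<Union>(set Xs) \<Longrightarrow> 1 \<le> length (filter (\<lambda>X. x \<in> X) Xs)"
  by (induction Xs) auto

lemma len_filter_zero: "x \<notin> \<Union>(set Xs) \<Longrightarrow> length (filter (\<lambda>X. x \<in> X) Xs) = 0"
  by (induction Xs) auto

lemma pdf_Cons: "pdf (X#Ms) \<longleftrightarrow> (X \<inter> \<Union>(set Ms) = {} \<and> pdf Ms)"
proof
  assume p: "pdf (X#Ms)"
  have "X \<inter> \<Union>(set Ms) = {}"
  proof (rule ccontr)
    assume "X \<inter> \<Union>(set Ms) \<noteq> {}"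
    then obtain x where "x \<in> X" "x \<in> \<Union>(set Ms)" by blast
    with len_filter_pos[of x Ms] p[unfolded pdf_def, rule_format, of x] show False by simp
  qed
  moreover have "pdf Ms" unfolding pdf_def
  proof
    fix x show "length (filter (\<lambda>X. x \<in> X) Ms) \<le> 1"
      using p[unfolded pdf_def, rule_format, of x] by (cases "x \<in> X") auto
  qed
  ultimately show "X \<inter> \<Union>(set Ms) = {} \<and> pdf Ms" by blast
next
  assume a: "X \<inter> \<Union>(set Ms) = {} \<and> pdf Ms"
  show "pdf (X#Ms)" unfolding pdf_def
  proof
    fix x show "length (filter (\<lambda>X. x \<in> X) (X#Ms)) \<le> 1"
    proof (cases "x \<in> X")
      case True
      then have "x \<notin> \<Union>(set Ms)" using a by blast
      then show ?thesis using True len_filter_zero[of x Ms] by simp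
    next
      case False
      then show ?thesis using a unfolding pdf_def by simp
    qed
  qed
qed

lemma pd_Cons: "(\<forall>i j. i < length (X#Ms) \<longrightarrow> j < length (X#Ms) \<longrightarrow> i \<noteq> j \<longrightarrow> (X#Ms)!i \<inter> (X#Ms)!j = {})
     \<longleftrightarrow> (X \<inter> \<Union>(set Ms) = {} \<and> (\<forall>i j. i < length Ms \<longrightarrow> j < length Ms \<longrightarrow> i \<noteq> j \<longrightarrow> Ms!i \<inter> Ms!j = {}))"
    (is "?A \<longleftrightarrow> ?B")
proof
  assume A: ?A
  have "X \<inter> \<Union>(set Ms) = {}"
  proof (rule ccontr)
    assume "X \<inter> \<Union>(set Ms) \<noteq> {}"
    then obtain x j where "x \<in> X" "j < length Ms" "x \<in> Ms!j" by (auto simp: in_set_conv_nth)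
    with A[rule_format, of 0 "Suc j"] show False by auto
  qed
  moreover have "\<forall>i j. i < length Ms \<longrightarrow> j < length Ms \<longrightarrow> i \<noteq> j \<longrightarrow> Ms!i \<inter> Ms!j = {}"
  proof (intro allI impI)
    fix i j assume "i < length Ms" "j < length Ms" "i \<noteq> j"
    then show "Ms!i \<inter> Ms!j = {}" using A[rule_format, of "Suc i" "Suc j"] by simp
  qed
  ultimately show ?B by blast
next
  assume B: ?B
  show ?A
  proof (intro allI impI)
    fix i j assume ij: "i < length (X#Ms)" "j < length (X#Ms)" "i \<noteq> j"
    show "(X#Ms)!i \<inter> (X#Ms)!j = {}"
    proof (cases i)
      case 0
      then obtain j' where "j = Suc j'" "j' < length Ms" using ij by (cases j) auto
      then have "Ms!j' \<in> set Ms" by simp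
      then show ?thesis using B \<open>j = Suc j'\<close> 0 by auto
    next
      case (Suc i')
      show ?thesis
      proof (cases j)
        case 0
        have "Ms!i' \<in> set Ms" using ij Suc by simp
        then show ?thesis using B 0 Suc by auto
      next
        case (Suc j')
        then show ?thesis using B ij \<open>i = Suc i'\<close> by auto
      qed
    qed
  qed
qed

lemma pd_iff_pdf:
  "(\<forall>i j. i < length Ms \<longrightarrow> j < length Ms \<longrightarrow> i \<noteq> j \<longrightarrow> Ms!i \<inter> Ms!j = {}) \<longleftrightarrow> pdf Ms"
proof (induction Ms)
  case Nil
  then show ?case by (simp add: pdf_def)
next
  case (Cons X Ms)
  show ?case unfolding pd_Cons pdf_Cons using Cons.IH by blast
qed

lemma pdf_append: "pdf (A @ B) \<Longrightarrow> pdf A \<and> pdf B \<and> \<Union>(set A) \<inter> \<Union>(set B) = {}"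
proof -
  assume p: "pdf (A @ B)"
  have e: "length (filter (\<lambda>X. x \<in> X) (A @ B)) = length (filter (\<lambda>X. x \<in> X) A) + length (filter (\<lambda>X. x \<in> X) B)" for x
    by simp
  have le: "length (filter (\<lambda>X. x \<in> X) A) + length (filter (\<lambda>X. x \<in> X) B) \<le> 1" for x
    using p[unfolded pdf_def, rule_format, of x] e[of x] by linarith
  have "pdf A" unfolding pdf_def using le by (meson add_leD1)
  moreover have "pdf B" unfolding pdf_def using le by (meson add_leD2)
  moreover have "\<Union>(set A) \<inter> \<Union>(set B) = {}"
  proof (rule ccontr)
    assume "\<Union>(set A) \<inter> \<Union>(set B) \<noteq> {}"
    then obtain x where "x \<in> \<Union>(set A)" "x \<in> \<Union>(set B)" by blast
    with len_filter_pos[of x A] len_filter_pos[of x B] le[of x] show False by linarith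
  qed
  ultimately show ?thesis by blast
qed

lemma pref_order_alt:
  "pref_order M Ms \<longleftrightarrow> (\<forall>X\<in>set Ms. X \<noteq> {}) \<and> pdf Ms \<and> \<Union>(set Ms) = M"
  unfolding pref_order_def pd_iff_pdf by (rule refl)

lemma coarsen:
  assumes "pref_order M (A @ Ps @ C)" "Ps \<noteq> []"
  shows "pref_order M (A @ [\<Union>(set Ps)] @ C)"
proof -
  have p: "pdf (A @ Ps @ C)" and ne: "\<forall>X\<in>set (A @ Ps @ C). X \<noteq> {}"
    and u: "\<Union>(set (A @ Ps @ C)) = M"
    using assms(1) unfolding pref_order_alt by auto
  have "pdf (A @ [\<Union>(set Ps)] @ C)" unfolding pdf_def
  proof
    fix x
    have 1: "length (filter (\<lambda>X. x \<in> X) [\<Union>(set Ps)]) \<le> length (filter (\<lambda>X. x \<in> X) Ps)"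
      using len_filter_pos[of x Ps] by auto
    have 2: "length (filter (\<lambda>X. x \<in> X) (A @ Ps @ C)) \<le> 1" using p unfolding pdf_def by blast
    have 3: "length (filter (\<lambda>X. x \<in> X) (A @ Ps @ C)) = length (filter (\<lambda>X. x \<in> X) A) + length (filter (\<lambda>X. x \<in> X) Ps) + length (filter (\<lambda>X. x \<in> X) C)"
      by simp
    have 4: "length (filter (\<lambda>X. x \<in> X) (A @ [\<Union>(set Ps)] @ C)) = length (filter (\<lambda>X. x \<in> X) A) + length (filter (\<lambda>X. x \<in> X) [\<Union>(set Ps)]) + length (filter (\<lambda>X. x \<in> X) C)"
      by (simp only: filter_append length_append add.assoc)
    show "length (filter (\<lambda>X. x \<in> X) (A @ [\<Union>(set Ps)] @ C)) \<le> 1"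
      using 1 2 3 4 by linarith
  qed
  moreover have "\<forall>X\<in>set (A @ [\<Union>(set Ps)] @ C). X \<noteq> {}" using ne assms(2)
    by (auto simp: neq_Nil_conv)
  moreover have "\<Union>(set (A @ [\<Union>(set Ps)] @ C)) = M" using u by auto
  ultimately show ?thesis unfolding pref_order_alt by blast
qed


lemma union_take:
  "\<Union>(set (take j Ms)) = \<Union>((!) Ms ` {..<min j (length Ms)})"
proof -
  have "set (take j Ms) = (!) Ms ` {..<min j (length Ms)}"
  proof -
    have "set (take j Ms) = (!) (take j Ms) ` {..<length (take j Ms)}"
      by (auto simp: in_set_conv_nth image_iff) (use nth_take in \<open>force+\<close>)
    also have "\<dots> = (!) Ms ` {..<min j (length Ms)}"
      by (rule image_cong) auto
    finally show ?thesis .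
  qed
  then show ?thesis by simp
qed

lemma sum_classes:
  assumes "finite M" "pref_order M Ms"
  shows "sum f (\<Union>(set (take j Ms))) = (\<Sum>k<min j (length Ms). sum f (Ms!k))"
proof -
  have d: "\<forall>i j. i < length Ms \<longrightarrow> j < length Ms \<longrightarrow> i \<noteq> j \<longrightarrow> Ms!i \<inter> Ms!j = {}"
    and u: "\<Union>(set Ms) = M" using assms(2) unfolding pref_order_def by auto
  have fin: "\<forall>k\<in>{..<min j (length Ms)}. finite (Ms!k)"
    using u assms(1) by (metis finite_subset Sup_upper lessThan_iff min_less_iff_conj nth_mem)
  show ?thesis unfolding union_take
    by (rule sum.UNION_disjoint) (use fin d in auto)
qed

lemma fosd_intro:
  assumes po: "pref_order M Ms"
    and h: "\<And>c. c < length Ms \<Longrightarrow> sum y (\<Union>(set (take (Suc c) Ms))) \<le> sum x (\<Union>(set (take (Suc c) Ms)))"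
  shows "fosd M Ms x y"
  unfolding fosd_def
proof
  fix a assume "a \<in> M"
  have d: "\<forall>i j. i < length Ms \<longrightarrow> j < length Ms \<longrightarrow> i \<noteq> j \<longrightarrow> Ms!i \<inter> Ms!j = {}"
    and u: "\<Union>(set Ms) = M" using po unfolding pref_order_def by auto
  obtain c where c: "c < length Ms" "a \<in> Ms!c" using \<open>a \<in> M\<close> u by (auto simp: in_set_conv_nth)
  have "{j\<in>M. weakly_pref Ms j a} = \<Union>(set (take (Suc c) Ms))"
  proof -
    have "weakly_pref Ms j a \<longleftrightarrow> (\<exists>k\<le>c. j \<in> Ms!k)" for j
    proof
      assume "weakly_pref Ms j a"
      then obtain k l where kl: "k \<le> l" "l < length Ms" "j \<in> Ms!k" "a \<in> Ms!l"
        unfolding weakly_pref_def by blast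
      then have "l = c" using d c by blast
      then show "\<exists>k\<le>c. j \<in> Ms!k" using kl by blast
    next
      assume "\<exists>k\<le>c. j \<in> Ms!k"
      then show "weakly_pref Ms j a" unfolding weakly_pref_def using c by blast
    qed
    moreover have "\<Union>(set (take (Suc c) Ms)) = {j. \<exists>k\<le>c. j \<in> Ms!k}"
      unfolding union_take using c by (auto simp: less_Suc_eq_le)
    moreover have "j \<in> Ms!k \<Longrightarrow> k \<le> c \<Longrightarrow> j \<in> M" for j k using u c by auto
    ultimately show ?thesis by auto
  qed
  then show "sum y {j\<in>M. weakly_pref Ms j a} \<le> sum x {j\<in>M. weakly_pref Ms j a}"
    using h[OF c(1)] by simp
qed

context
  fixes M :: "'a set" and \<phi> :: "'a set list \<Rightarrow> 'a \<Rightarrow> real"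
  assumes fin: "finite M" and mech: "mechanism M \<phi>"
    and resp: "sep_responsive M \<phi>"
    and up: "sep_upper_invariant M \<phi>" and low: "sep_lower_invariant M \<phi>"
begin

lemma class_mass:
  assumes po: "pref_order M Ms" and po2: "pref_order M Ms2" and kap: "\<kappa> < length Ms"
    and h: "\<And>k. k < length Ms \<Longrightarrow> k \<noteq> \<kappa> \<Longrightarrow> sum (\<phi> Ms2) (Ms!k) = sum (\<phi> Ms) (Ms!k)"
  shows "sum (\<phi> Ms2) (Ms!\<kappa>) = sum (\<phi> Ms) (Ms!\<kappa>)"
proof -
  have u: "\<Union>(set Ms) = M" using po unfolding pref_order_def by auto
  have "sum f M = (\<Sum>k<length Ms. sum f (Ms!k))" for f
    using sum_classes[OF fin po, of f "length Ms"] u by simp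
  also have "(\<Sum>k<length Ms. sum f (Ms!k)) = sum f (Ms!\<kappa>) + (\<Sum>k\<in>{..<length Ms} - {\<kappa>}. sum f (Ms!k))" for f
    using kap by (simp add: sum.remove)
  finally have e: "sum f M = sum f (Ms!\<kappa>) + (\<Sum>k\<in>{..<length Ms} - {\<kappa>}. sum f (Ms!k))" for f .
  have "sum (\<phi> Ms) M = 1" "sum (\<phi> Ms2) M = 1" using mech po po2 unfolding mechanism_def by auto
  moreover have "(\<Sum>k\<in>{..<length Ms} - {\<kappa>}. sum (\<phi> Ms2) (Ms!k)) = (\<Sum>k\<in>{..<length Ms} - {\<kappa>}. sum (\<phi> Ms) (Ms!k))"
    by (rule sum.cong) (auto intro: h)
  ultimately show ?thesis using e[of "\<phi> Ms"] e[of "\<phi> Ms2"] by linarith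
qed

lemma G:
  assumes "pref_order M Ms" "pref_order M (take \<kappa> Ms @ Ps @ drop (Suc \<kappa>) Ms)"
    "\<kappa> < length Ms" "Ps \<noteq> []" "\<Union>(set Ps) = Ms!\<kappa>" "k < length Ms"
  shows "sum (\<phi> (take \<kappa> Ms @ Ps @ drop (Suc \<kappa>) Ms)) (Ms!k) = sum (\<phi> Ms) (Ms!k)"
  using assms
proof (induction Ps arbitrary: Ms \<kappa> k)
  case Nil
  then show ?case by simp
next
  case (Cons X Ps')
  show ?case
  proof (cases "Ps' = []")
    case True
    then have "take \<kappa> Ms @ (X # Ps') @ drop (Suc \<kappa>) Ms = Ms"
      using Cons.prems(3,5) by (simp add: id_take_nth_drop[symmetric])
    then show ?thesis by simp
  next
    case False
    define U where "U = \<Union>(set Ps')"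
    define R where "R = take \<kappa> Ms @ [X, U] @ drop (Suc \<kappa>) Ms"
    define Ms' where "Ms' = take \<kappa> Ms @ (X # Ps') @ drop (Suc \<kappa>) Ms"
    have lt: "length (take \<kappa> Ms) = \<kappa>" using Cons.prems(3) by simp
    have poMs': "pref_order M Ms'" using Cons.prems(2) unfolding Ms'_def .
    have poR: "pref_order M R"
      using coarsen[of M "take \<kappa> Ms @ [X]" Ps' "drop (Suc \<kappa>) Ms"] poMs' False
      unfolding R_def Ms'_def U_def by simp
    have "pdf ((take \<kappa> Ms @ [X]) @ (Ps' @ drop (Suc \<kappa>) Ms))"
      using poMs' unfolding Ms'_def pref_order_alt by simp
    from pdf_append[OF this] have XU: "X \<inter> U = {}" unfolding U_def by auto
    have sep: "separation M Ms R \<kappa> X U"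
      unfolding separation_def using Cons.prems(1,3,5) poR XU unfolding R_def U_def by auto
    have Ms'R: "Ms' = take (Suc \<kappa>) R @ Ps' @ drop (Suc (Suc \<kappa>)) R"
      unfolding Ms'_def R_def using lt by simp
    have lR: "length R = Suc (length Ms)" unfolding R_def using Cons.prems(3) by simp
    have RU: "R ! Suc \<kappa> = U" unfolding R_def using lt by (simp add: nth_append)
    have IH: "sum (\<phi> Ms') (R!k') = sum (\<phi> R) (R!k')" if "k' < length R" for k'
      using Cons.IH[of R "Suc \<kappa>" k'] poR Ms'R poMs' lR Cons.prems(3) False RU that
      unfolding U_def by simp
    have ne: "sum (\<phi> Ms') (Ms!k) = sum (\<phi> Ms) (Ms!k)" if "k < length Ms" "k \<noteq> \<kappa>" for k
    proof (cases "k < \<kappa>")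
      case True
      have "R!k = Ms!k" unfolding R_def using True lt by (simp add: nth_append)
      then show ?thesis using IH[of k] up[unfolded sep_upper_invariant_def, rule_format, OF sep True]
        lR that by simp
    next
      case False
      then have gt: "\<kappa> < k" using that by simp
      have "R!(Suc k) = Ms!k" unfolding R_def using gt lt that
        by (simp add: nth_append)
      then show ?thesis using IH[of "Suc k"] low[unfolded sep_lower_invariant_def, rule_format, OF sep gt]
        lR that by simp
    qed
    have "sum (\<phi> Ms') (Ms!\<kappa>) = sum (\<phi> Ms) (Ms!\<kappa>)"
      by (rule class_mass[OF Cons.prems(1) poMs' Cons.prems(3)]) (use ne in auto)
    then show ?thesis using ne Cons.prems(6) unfolding Ms'_def by (cases "k = \<kappa>") auto
  qed
qed

lemma K:
  assumes po: "pref_order M Ms" and po': "pref_order M (take \<kappa> Ms @ Ps @ drop (Suc \<kappa>) Ms)"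
    and kap: "\<kappa> < length Ms" and un: "\<Union>(set Ps) = Ms!\<kappa>" and m: "0 < m" "m < length Ps"
  shows "sum (\<phi> Ms) (\<Union>(set (take m Ps))) \<le> sum (\<phi> (take \<kappa> Ms @ Ps @ drop (Suc \<kappa>) Ms)) (\<Union>(set (take m Ps)))"
proof -
  define U where "U = \<Union>(set (take m Ps))"
  define Q where "Q = \<Union>(set (drop m Ps))"
  define Ms' where "Ms' = take \<kappa> Ms @ Ps @ drop (Suc \<kappa>) Ms"
  define R2 where "R2 = take \<kappa> Ms @ [U] @ drop m Ps @ drop (Suc \<kappa>) Ms"
  define R where "R = take \<kappa> Ms @ [U, Q] @ drop (Suc \<kappa>) Ms"
  have lt: "length (take \<kappa> Ms) = \<kappa>" using kap by simp
  have tne: "take m Ps \<noteq> []" and dne: "drop m Ps \<noteq> []" using m by auto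
  have po'': "pref_order M (take \<kappa> Ms @ take m Ps @ (drop m Ps @ drop (Suc \<kappa>) Ms))"
    using po' by (metis append_assoc append_take_drop_id)
  have poR2: "pref_order M R2"
    using coarsen[OF po'' tne] unfolding R2_def U_def by simp
  have poR: "pref_order M R"
    using coarsen[of M "take \<kappa> Ms @ [U]" "drop m Ps" "drop (Suc \<kappa>) Ms"] poR2 dne
    unfolding R2_def R_def Q_def by simp
  have "pdf ((take \<kappa> Ms @ take m Ps) @ (drop m Ps @ drop (Suc \<kappa>) Ms))"
  proof -
    have "pdf (take \<kappa> Ms @ take m Ps @ (drop m Ps @ drop (Suc \<kappa>) Ms))"
      using conjunct1[OF conjunct2[OF po''[unfolded pref_order_alt]]] .
    then show ?thesis by (simp only: append_assoc)
  qed
  from pdf_append[OF this] have UQ: "U \<inter> Q = {}" unfolding U_def Q_def by auto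
  have "set Ps = set (take m Ps) \<union> set (drop m Ps)"
    by (metis append_take_drop_id set_append)
  then have UQu: "U \<union> Q = Ms!\<kappa>" unfolding U_def Q_def using un by auto
  have sep: "separation M Ms R \<kappa> U Q"
    unfolding separation_def using po poR kap UQ UQu unfolding R_def by auto
  have 1: "sum (\<phi> Ms) U \<le> sum (\<phi> R) U"
    using resp[unfolded sep_responsive_def, rule_format, OF sep] by simp
  have lR: "length R = Suc (length Ms)" unfolding R_def using kap by simp
  have RQ: "R ! Suc \<kappa> = Q" unfolding R_def using lt by (simp add: nth_append)
  have RU: "R ! \<kappa> = U" unfolding R_def using lt by (simp add: nth_append)
  have R2eq: "take (Suc \<kappa>) R @ drop m Ps @ drop (Suc (Suc \<kappa>)) R = R2"
    unfolding R_def R2_def using lt by simp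
  have "sum (\<phi> (take (Suc \<kappa>) R @ drop m Ps @ drop (Suc (Suc \<kappa>)) R)) (R!\<kappa>) = sum (\<phi> R) (R!\<kappa>)"
    by (rule G) (use poR R2eq poR2 lR kap dne RQ Q_def in auto)
  then have 2: "sum (\<phi> R2) U = sum (\<phi> R) U" unfolding R2eq RU .
  have lt2: "length (take \<kappa> R2) = \<kappa>" unfolding R2_def using kap by simp
  have Ms'eq: "take \<kappa> R2 @ take m Ps @ drop (Suc \<kappa>) R2 = Ms'"
    unfolding R2_def Ms'_def using lt by simp
  have R2U: "R2 ! \<kappa> = U" unfolding R2_def using lt by (simp add: nth_append)
  have lR2: "\<kappa> < length R2" unfolding R2_def using kap by simp
  have "sum (\<phi> (take \<kappa> R2 @ take m Ps @ drop (Suc \<kappa>) R2)) (R2!\<kappa>) = sum (\<phi> R2) (R2!\<kappa>)"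
    by (rule G) (use poR2 Ms'eq po' Ms'_def lR2 tne R2U U_def in auto)
  then have 3: "sum (\<phi> Ms') U = sum (\<phi> R2) U" unfolding Ms'eq R2U .
  show ?thesis using 1 2 3 unfolding Ms'_def U_def by linarith
qed

end

theorem lemma5:
  fixes M :: "'a set" and \<phi> :: "'a set list \<Rightarrow> 'a \<Rightarrow> real" and L :: nat
  assumes "finite M"
    and "mechanism M \<phi>"
    and "sep_monotonic M \<phi>"
    and "sep_upper_invariant M \<phi>"
    and "sep_lower_invariant M \<phi>"
    and "2 \<le> L"
  shows "L_sep_strategyproof M L \<phi>"
  unfolding L_sep_strategyproof_def
proof (intro allI impI)
  fix Ms Ms' \<kappa> Ps assume Ls: "L_separation M L Ms Ms' \<kappa> Ps"
  have resp: "sep_responsive M \<phi>" using assms(3) unfolding sep_monotonic_def by blast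
  note fin = assms(1)
  have po: "pref_order M Ms" and po': "pref_order M Ms'" and kap: "\<kappa> < length Ms"
    and len: "length Ps = L" and un: "\<Union>(set Ps) = Ms!\<kappa>"
    and Ms'eq: "Ms' = take \<kappa> Ms @ Ps @ drop (Suc \<kappa>) Ms"
    using Ls unfolding L_separation_def by auto
  have Psne: "Ps \<noteq> []" using len assms(6) by auto
  have lt: "length (take \<kappa> Ms) = \<kappa>" using kap by simp
  have Gk: "sum (\<phi> Ms') (Ms!k) = sum (\<phi> Ms) (Ms!k)" if "k < length Ms" for k
    using G[OF assms(1,2) resp assms(4,5) po po'[unfolded Ms'eq] kap Psne un that] Ms'eq by simp
  have Up: "sum (\<phi> Ms') (\<Union>(set (take j Ms))) = sum (\<phi> Ms) (\<Union>(set (take j Ms)))" for j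
    unfolding sum_classes[OF fin po] by (rule sum.cong) (auto intro: Gk)
  have f1: "fosd M Ms (\<phi> Ms) (\<phi> Ms')"
    by (rule fosd_intro[OF po]) (simp add: Up)
  have f2: "fosd M Ms' (\<phi> Ms') (\<phi> Ms)"
  proof (rule fosd_intro[OF po'])
    fix c assume c: "c < length Ms'"
    have lMs': "length Ms' = \<kappa> + L + (length Ms - Suc \<kappa>)" using Ms'eq kap len by simp
    consider (a) "c < \<kappa>" | (b) "\<kappa> \<le> c" "Suc c < \<kappa> + L" | (d) "\<kappa> + L \<le> Suc c" by linarith
    then show "sum (\<phi> Ms) (\<Union>(set (take (Suc c) Ms'))) \<le> sum (\<phi> Ms') (\<Union>(set (take (Suc c) Ms')))"
    proof cases
      case a
      then have "take (Suc c) Ms' = take (Suc c) Ms" unfolding Ms'eq using lt by simp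
      then show ?thesis using Up by simp
    next
      case d
      define j where "j = Suc c - \<kappa> - L"
      have A: "take (Suc c) Ms' = take \<kappa> Ms @ Ps @ take j (drop (Suc \<kappa>) Ms)"
        unfolding Ms'eq j_def using lt len d by simp
      have B: "take (Suc \<kappa> + j) Ms = take \<kappa> Ms @ [Ms!\<kappa>] @ take j (drop (Suc \<kappa>) Ms)"
        using take_add[of "Suc \<kappa>" j Ms] take_Suc_conv_app_nth[OF kap] by simp
      have e1: "\<Union>(set (take (Suc c) Ms')) = \<Union>(set (take \<kappa> Ms)) \<union> (\<Union>(set Ps) \<union> \<Union>(set (take j (drop (Suc \<kappa>) Ms))))"
        by (simp only: A set_append Union_Un_distrib)
      have e2: "\<Union>(set (take (Suc \<kappa> + j) Ms)) = \<Union>(set (take \<kappa> Ms)) \<union> (\<Union>(set [Ms!\<kappa>]) \<union> \<Union>(set (take j (drop (Suc \<kappa>) Ms))))"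
        by (simp only: B set_append Union_Un_distrib)
      have e3: "\<Union>(set [Ms!\<kappa>]) = \<Union>(set Ps)" using un by simp
      have E: "\<Union>(set (take (Suc c) Ms')) = \<Union>(set (take (Suc \<kappa> + j) Ms))"
        unfolding e1 e2 e3 by (rule refl)
      show ?thesis unfolding E using Up[of "Suc \<kappa> + j"] by linarith
    next
      case b
      define m where "m = Suc c - \<kappa>"
      have m: "0 < m" "m < length Ps" using b len unfolding m_def by auto
      have "take (Suc c) Ms' = take \<kappa> Ms @ take m Ps"
        unfolding Ms'eq m_def using lt len b by simp
      then have e: "\<Union>(set (take (Suc c) Ms')) = \<Union>(set (take \<kappa> Ms)) \<union> \<Union>(set (take m Ps))" by simp
      have "pdf Ms" using conjunct1[OF conjunct2[OF po[unfolded pref_order_alt]]] .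
      then have "pdf (take \<kappa> Ms @ drop \<kappa> Ms)" by (simp only: append_take_drop_id)
      from pdf_append[OF this] have D: "\<Union>(set (take \<kappa> Ms)) \<inter> \<Union>(set (drop \<kappa> Ms)) = {}" by (rule conjunct2[OF conjunct2])
      have mem: "Ms!\<kappa> \<in> set (drop \<kappa> Ms)" using kap by (metis Cons_nth_drop_Suc list.set_intros(1))
      have sub: "\<Union>(set (take m Ps)) \<subseteq> Ms!\<kappa>" using un
        by (metis Sup_subset_mono set_take_subset)
      have disj: "\<Union>(set (take \<kappa> Ms)) \<inter> \<Union>(set (take m Ps)) = {}"
        using D mem sub by blast
      have uM: "\<Union>(set Ms) = M" using conjunct2[OF conjunct2[OF po[unfolded pref_order_alt]]] .
      have "\<Union>(set (take \<kappa> Ms)) \<subseteq> \<Union>(set Ms)" by (meson Sup_subset_mono set_take_subset)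
      then have f1: "finite (\<Union>(set (take \<kappa> Ms)))" using fin uM finite_subset by metis
      have "Ms!\<kappa> \<subseteq> \<Union>(set Ms)" using nth_mem[OF kap] by (rule Sup_upper)
      then have f2: "finite (\<Union>(set (take m Ps)))" using sub fin uM finite_subset by metis
      have K': "sum (\<phi> Ms) (\<Union>(set (take m Ps))) \<le> sum (\<phi> Ms') (\<Union>(set (take m Ps)))"
        using K[OF assms(1,2) resp assms(4,5) po po'[unfolded Ms'eq] kap un m] Ms'eq by simp
      show ?thesis unfolding e sum.union_disjoint[OF f1 f2 disj] using Up[of \<kappa>] K' by simp
    qed
  qed
  show "fosd M Ms (\<phi> Ms) (\<phi> Ms') \<and> fosd M Ms' (\<phi> Ms') (\<phi> Ms)" using f1 f2 by blast
qed

end
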